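(* Let $A$ be a finite-dimensional vector space and define the bilinear form $\mathcal{B}$ on $A\oplus A^*$ by $\mathcal{B}(x+a^*,y+b^* )=\langle y,a^*\rangle-\langle x,b^*\rangle$. (a) If $(A,\bullet,\{\cdot,\cdot\})$ is a Poisson algebra, then $A\oplus A^*$ with $(x+a^* )\circ(y+b^* )=x\bullet y-L_\bullet^*(x)b^*$ and $[x+a^*,y+b^*]=\{x,y\}+\mathrm{ad}^*(x)b^*$, together with $\mathcal{B}$, is a quadratic dual pre-Poisson algebra. (b) If $(A,\circ,[\cdot,\cdot])$ is a dual pre-Poisson algebra, then $A\oplus A^*$ with $(x+a^* )\circ(y+b^* )=x\circ y-L_\circ^*(x)b^*+(-L_\circ^*+R_\circ^* )(y)a^*$ and $[x+a^*,y+b^*]=[x,y]+L_{[\cdot,\cdot]}^*(x)b^*-(L_{[\cdot,\cdot]}^*+R_{[\cdot,\cdot]}^* )(y)a^*$, together with $\mathcal{B}$, is a quadratic dual pre-Poisson algebra.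
   Context: Field $\mathbb{F}$ of characteristic $0$. $L_\diamond(x)y=x\diamond y$, $R_\diamond(x)y=y\diamond x$, $\mathrm{ad}(x)y=\{x,y\}$; for $f:A\to\mathrm{End}(V)$, $\langle f^*(x)v^*,u\rangle=-\langle v^*,f(x)u\rangle$. A Poisson algebra: $(A,\bullet)$ commutative associative, $(A,\{\cdot,\cdot\})$ Lie, $\{x,y\bullet z\}=\{x,y\}\bullet z+y\bullet\{x,z\}$. A dual pre-Poisson algebra: $x\circ(y\circ z)=(x\circ y)\circ z=(y\circ x)\circ z$; $[x,[y,z]]=[[x,y],z]+[y,[x,z]]$; $[x,y\circ z]=[x,y]\circ z+y\circ[x,z]$; $[x\circ y,z]=x\circ[y,z]+y\circ[x,z]$; $[x,y]\circ z=-[y,x]\circ z$. A quadratic dual pre-Poisson algebra is a dual pre-Poisson algebra with a nondegenerate skew-symmetric bilinear form $\mathcal{B}$ that is invariant: $\mathcal{B}(x\circ y,z)=\mathcal{B}(x,y\circ z-z\circ y)$ and $\mathcal{B}([x,y],z)=\mathcal{B}(x,[y,z]+[z,y])$ for all $x,y,z$. *)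

theory Defs
  imports Complex_Main "HOL-Library.Function_Algebras" "HOL-Library.Product_Plus"
begin

definition bilinear_op_on :: "('k::comm_ring_1 \<Rightarrow> 'v::ab_group_add \<Rightarrow> 'v) \<Rightarrow> 'v set \<Rightarrow> ('v \<Rightarrow> 'v \<Rightarrow> 'v) \<Rightarrow> bool" where
  "bilinear_op_on sc V m \<longleftrightarrow>
     (\<forall>x\<in>V. \<forall>y\<in>V. m x y \<in> V) \<and>
     (\<forall>x\<in>V. \<forall>y\<in>V. \<forall>z\<in>V. m (x + y) z = m x z + m y z \<and> m z (x + y) = m z x + m z y) \<and>
     (\<forall>c. \<forall>x\<in>V. \<forall>y\<in>V. m (sc c x) y = sc c (m x y) \<and> m x (sc c y) = sc c (m x y))"

definition bilinear_form_on :: "('k::comm_ring_1 \<Rightarrow> 'v::ab_group_add \<Rightarrow> 'v) \<Rightarrow> 'v set \<Rightarrow> ('v \<Rightarrow> 'v \<Rightarrow> 'k) \<Rightarrow> bool" where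
  "bilinear_form_on sc V B \<longleftrightarrow>
     (\<forall>x\<in>V. \<forall>y\<in>V. \<forall>z\<in>V. B (x + y) z = B x z + B y z \<and> B z (x + y) = B z x + B z y) \<and>
     (\<forall>c. \<forall>x\<in>V. \<forall>y\<in>V. B (sc c x) y = c * B x y \<and> B x (sc c y) = c * B x y)"

definition poisson_algebra :: "('k::field \<Rightarrow> 'a::ab_group_add \<Rightarrow> 'a) \<Rightarrow> ('a \<Rightarrow> 'a \<Rightarrow> 'a) \<Rightarrow> ('a \<Rightarrow> 'a \<Rightarrow> 'a) \<Rightarrow> bool" where
  "poisson_algebra sc dot pb \<longleftrightarrow>
     Vector_Spaces.vector_space sc \<and> bilinear_op_on sc UNIV dot \<and> bilinear_op_on sc UNIV pb \<and>
     (\<forall>x y. dot x y = dot y x) \<and>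
     (\<forall>x y z. dot (dot x y) z = dot x (dot y z)) \<and>
     (\<forall>x y. pb x y = - pb y x) \<and>
     (\<forall>x y z. pb x (pb y z) + pb y (pb z x) + pb z (pb x y) = 0) \<and>
     (\<forall>x y z. pb x (dot y z) = dot (pb x y) z + dot y (pb x z))"

definition dual_pre_poisson_on :: "('k::field \<Rightarrow> 'v::ab_group_add \<Rightarrow> 'v) \<Rightarrow> 'v set \<Rightarrow> ('v \<Rightarrow> 'v \<Rightarrow> 'v) \<Rightarrow> ('v \<Rightarrow> 'v \<Rightarrow> 'v) \<Rightarrow> bool" where
  "dual_pre_poisson_on sc V circ br \<longleftrightarrow>
     Vector_Spaces.vector_space sc \<and> Modules.module.subspace sc V \<and>
     bilinear_op_on sc V circ \<and> bilinear_op_on sc V br \<and>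
     (\<forall>x\<in>V. \<forall>y\<in>V. \<forall>z\<in>V.
        circ x (circ y z) = circ (circ x y) z \<and>
        circ (circ x y) z = circ (circ y x) z \<and>
        br x (br y z) = br (br x y) z + br y (br x z) \<and>
        br x (circ y z) = circ (br x y) z + circ y (br x z) \<and>
        br (circ x y) z = circ x (br y z) + circ y (br x z) \<and>
        circ (br x y) z = - circ (br y x) z)"

definition quadratic_dual_pre_poisson_on ::
  "('k::field \<Rightarrow> 'v::ab_group_add \<Rightarrow> 'v) \<Rightarrow> 'v set \<Rightarrow> ('v \<Rightarrow> 'v \<Rightarrow> 'v) \<Rightarrow> ('v \<Rightarrow> 'v \<Rightarrow> 'v) \<Rightarrow> ('v \<Rightarrow> 'v \<Rightarrow> 'k) \<Rightarrow> bool" where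
  "quadratic_dual_pre_poisson_on sc V circ br B \<longleftrightarrow>
     dual_pre_poisson_on sc V circ br \<and>
     bilinear_form_on sc V B \<and>
     (\<forall>x\<in>V. \<forall>y\<in>V. B x y = - B y x) \<and>
     (\<forall>x\<in>V. (\<forall>y\<in>V. B x y = 0) \<longrightarrow> x = 0) \<and>
     (\<forall>x\<in>V. \<forall>y\<in>V. \<forall>z\<in>V.
        B (circ x y) z = B x (circ y z - circ z y) \<and>
        B (br x y) z = B x (br y z + br z y))"

definition dual_space :: "('k::field \<Rightarrow> 'a::ab_group_add \<Rightarrow> 'a) \<Rightarrow> ('a \<Rightarrow> 'k) set" where
  "dual_space sc = {f. Vector_Spaces.linear sc (\<lambda>c d. c * d) f}"

definition dsum :: "('k::field \<Rightarrow> 'a::ab_group_add \<Rightarrow> 'a) \<Rightarrow> ('a \<times> ('a \<Rightarrow> 'k)) set" where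
  "dsum sc = {p. snd p \<in> dual_space sc}"

definition dsum_scale :: "('k::field \<Rightarrow> 'a::ab_group_add \<Rightarrow> 'a) \<Rightarrow> 'k \<Rightarrow> 'a \<times> ('a \<Rightarrow> 'k) \<Rightarrow> 'a \<times> ('a \<Rightarrow> 'k)" where
  "dsum_scale sc c p = (sc c (fst p), \<lambda>u. c * snd p u)"

definition dsum_form :: "'a \<times> ('a \<Rightarrow> 'k::field) \<Rightarrow> 'a \<times> ('a \<Rightarrow> 'k) \<Rightarrow> 'k" where
  "dsum_form p q = snd p (fst q) - snd q (fst p)"

definition dual_rep :: "('a \<Rightarrow> 'a \<Rightarrow> 'a) \<Rightarrow> 'a \<Rightarrow> ('a \<Rightarrow> 'k::field) \<Rightarrow> ('a \<Rightarrow> 'k)" where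
  "dual_rep f x v = (\<lambda>u. - v (f x u))"

definition Lmul :: "('a \<Rightarrow> 'a \<Rightarrow> 'a) \<Rightarrow> 'a \<Rightarrow> 'a \<Rightarrow> 'a" where "Lmul m x y = m x y"
definition Rmul :: "('a \<Rightarrow> 'a \<Rightarrow> 'a) \<Rightarrow> 'a \<Rightarrow> 'a \<Rightarrow> 'a" where "Rmul m x y = m y x"

definition circ_a :: "('a \<Rightarrow> 'a \<Rightarrow> 'a) \<Rightarrow> 'a \<times> ('a \<Rightarrow> 'k::field) \<Rightarrow> 'a \<times> ('a \<Rightarrow> 'k) \<Rightarrow> 'a \<times> ('a \<Rightarrow> 'k)" where
  "circ_a dot p q = (dot (fst p) (fst q), - dual_rep (Lmul dot) (fst p) (snd q))"

definition br_a :: "('a \<Rightarrow> 'a \<Rightarrow> 'a) \<Rightarrow> 'a \<times> ('a \<Rightarrow> 'k::field) \<Rightarrow> 'a \<times> ('a \<Rightarrow> 'k) \<Rightarrow> 'a \<times> ('a \<Rightarrow> 'k)" where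
  "br_a pb p q = (pb (fst p) (fst q), dual_rep (Lmul pb) (fst p) (snd q))"

definition circ_b :: "('a \<Rightarrow> 'a \<Rightarrow> 'a) \<Rightarrow> 'a \<times> ('a \<Rightarrow> 'k::field) \<Rightarrow> 'a \<times> ('a \<Rightarrow> 'k) \<Rightarrow> 'a \<times> ('a \<Rightarrow> 'k)" where
  "circ_b circ p q = (circ (fst p) (fst q),
      - dual_rep (Lmul circ) (fst p) (snd q)
      + (- dual_rep (Lmul circ) (fst q) (snd p) + dual_rep (Rmul circ) (fst q) (snd p)))"

definition br_b :: "('a \<Rightarrow> 'a \<Rightarrow> 'a) \<Rightarrow> 'a \<times> ('a \<Rightarrow> 'k::field) \<Rightarrow> 'a \<times> ('a \<Rightarrow> 'k) \<Rightarrow> 'a \<times> ('a \<Rightarrow> 'k)" where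
  "br_b br p q = (br (fst p) (fst q),
      dual_rep (Lmul br) (fst p) (snd q)
      - (dual_rep (Lmul br) (fst q) (snd p) + dual_rep (Rmul br) (fst q) (snd p)))"

end

theory Submission
  imports Defs
begin


lemma vs_mult: "Vector_Spaces.vector_space ((*)::'k::field \<Rightarrow> 'k \<Rightarrow> 'k)"
  by unfold_locales (auto simp: algebra_simps)

lemma dualD:
  assumes "f \<in> dual_space sc"
  shows "f (x + y) = f x + f y" "f (sc c x) = c * f x"
  using assms unfolding dual_space_def Vector_Spaces.linear_def module_hom_def module_hom_axioms_def
  by auto

lemma dualI:
  assumes "Vector_Spaces.vector_space sc" "\<And>x y. f (x + y) = f x + f y" "\<And>c x. f (sc c x) = c * f x"
  shows "f \<in> dual_space sc"
  using assms vs_mult unfolding dual_space_def Vector_Spaces.linear_def module_hom_def module_hom_axioms_def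
  by (auto simp: module_iff_vector_space)

lemma dual_add[simp]: "f \<in> dual_space sc \<Longrightarrow> f (x + y) = f x + f y" by (rule dualD)
lemma dual_scale[simp]: "f \<in> dual_space sc \<Longrightarrow> f (sc c x) = c * f x" by (rule dualD)
lemma dual_zero[simp]: "f \<in> dual_space sc \<Longrightarrow> f 0 = 0"
  using dual_add[of f sc 0 0] by (metis add.right_neutral add_left_cancel)
lemma dual_neg[simp]: "f \<in> dual_space sc \<Longrightarrow> f (- x) = - f x"
  using dual_add[of f sc x "-x"] by (metis add.right_inverse dual_zero minus_unique)
lemma dual_diff[simp]: "f \<in> dual_space sc \<Longrightarrow> f (x - y) = f x - f y"
  using dual_add[of f sc x "-y"] by simp

locale bil =
  fixes sc :: "'k::field \<Rightarrow> 'a::ab_group_add \<Rightarrow> 'a" and m :: "'a \<Rightarrow> 'a \<Rightarrow> 'a"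
  assumes B: "bilinear_op_on sc UNIV m"
begin
lemma addL[simp]: "m (x + y) z = m x z + m y z" using B unfolding bilinear_op_on_def by blast
lemma addR[simp]: "m z (x + y) = m z x + m z y" using B unfolding bilinear_op_on_def by blast
lemma scL[simp]: "m (sc c x) y = sc c (m x y)" using B unfolding bilinear_op_on_def by blast
lemma scR[simp]: "m x (sc c y) = sc c (m x y)" using B unfolding bilinear_op_on_def by blast
lemma zeroL[simp]: "m 0 y = 0" using addL[where x=0 and y=0 and z=y] by (metis add.right_neutral add_left_cancel)
lemma zeroR[simp]: "m y 0 = 0" using addR[where x=0 and y=0 and z=y] by (metis add.right_neutral add_left_cancel)
lemma negL[simp]: "m (- x) y = - m x y" using addL[where x=x and y="-x" and z=y] by (metis add.right_inverse zeroL minus_unique)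
lemma negR[simp]: "m y (- x) = - m y x" using addR[where x=x and y="-x" and z=y] by (metis add.right_inverse zeroR minus_unique)
lemma diffL[simp]: "m (x - z) y = m x y - m z y" using addL[where x=x and y="-z" and z=y] by simp
lemma diffR[simp]: "m y (x - z) = m y x - m y z" using addR[where x=x and y="-z" and z=y] by simp
end

lemma dsum_mem[simp]: "(x, a) \<in> dsum sc \<longleftrightarrow> a \<in> dual_space sc"
  by (simp add: dsum_def)

lemma dsum_scale_Pair[simp]: "dsum_scale sc c (x, a) = (sc c x, \<lambda>u. c * a u)"
  by (simp add: dsum_scale_def)

lemma dsum_form_Pair[simp]: "dsum_form (x, a) (y, b) = a y - b x"
  by (simp add: dsum_form_def)

lemma vs_dsum:
  assumes "Vector_Spaces.vector_space sc"
  shows "Vector_Spaces.vector_space (dsum_scale sc)"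
proof -
  interpret vector_space sc by fact
  show ?thesis
    by unfold_locales (auto simp: dsum_scale_def scale_right_distrib scale_left_distrib fun_eq_iff algebra_simps)
qed

lemma subspace_dsum:
  assumes "Vector_Spaces.vector_space sc"
  shows "module.subspace (dsum_scale sc) (dsum sc)"
proof -
  interpret vector_space sc by fact
  have z: "0 \<in> dual_space sc" by (rule dualI[OF assms]) auto
  interpret d: vector_space "dsum_scale sc" by (rule vs_dsum[OF assms])
  show ?thesis
    unfolding d.subspace_def
  proof (intro conjI ballI allI)
    show "0 \<in> dsum sc" using z by (simp add: dsum_def)
  next
    fix x y assume "x \<in> dsum sc" "y \<in> dsum sc"
    then show "x + y \<in> dsum sc" unfolding dsum_def
      by (auto intro!: dualI[OF assms] simp: algebra_simps)
  next
    fix c x assume "x \<in> dsum sc"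
    then show "dsum_scale sc c x \<in> dsum sc" unfolding dsum_def dsum_scale_def
      by (auto intro!: dualI[OF assms] simp: algebra_simps)
  qed
qed

lemma form_dsum:
  assumes vs: "Vector_Spaces.vector_space sc" and fd: "\<exists>Basis. finite_dimensional_vector_space sc Basis"
  shows "bilinear_form_on (dsum_scale sc) (dsum sc) dsum_form"
    "\<forall>x\<in>dsum sc. \<forall>y\<in>dsum sc. dsum_form x y = - dsum_form y x"
    "\<forall>x\<in>dsum sc. (\<forall>y\<in>dsum sc. dsum_form x y = 0) \<longrightarrow> x = 0"
proof -
  interpret vector_space sc by fact
  show "bilinear_form_on (dsum_scale sc) (dsum sc) dsum_form"
    unfolding bilinear_form_on_def dsum_def dsum_form_def dsum_scale_def
    by (auto simp: algebra_simps)
  show "\<forall>x\<in>dsum sc. \<forall>y\<in>dsum sc. dsum_form x y = - dsum_form y x"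
    by (auto simp: dsum_form_def)
  obtain Bs where fdv: "finite_dimensional_vector_space sc Bs" using fd by blast
  interpret fdv: finite_dimensional_vector_space sc Bs by (rule fdv)
  have sep: "x = 0" if h: "\<And>f. f \<in> dual_space sc \<Longrightarrow> f x = 0" for x
  proof -
    have "representation Bs x b = 0" for b
      using h[of "\<lambda>v. representation Bs v b"] linear_representation[OF fdv.independent_Basis fdv.span_Basis]
      by (simp add: dual_space_def)
    then have "(\<Sum>b | representation Bs x b \<noteq> 0. sc (representation Bs x b) b) = 0" by simp
    then show ?thesis using sum_nonzero_representation_eq[OF fdv.independent_Basis] fdv.span_Basis by simp
  qed
  have z: "0 \<in> dual_space sc" by (rule dualI[OF assms(1)]) auto
  show "\<forall>x\<in>dsum sc. (\<forall>y\<in>dsum sc. dsum_form x y = 0) \<longrightarrow> x = 0"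
  proof (intro ballI impI)
    fix p assume p: "p \<in> dsum sc" and h: "\<forall>y\<in>dsum sc. dsum_form p y = 0"
    obtain x a where pe: "p = (x, a)" by fastforce
    have "x = 0"
    proof (rule sep)
      fix f assume "f \<in> dual_space sc"
      then show "f x = 0" using h[rule_format, of "(0, f)"] pe p by simp
    qed
    moreover have "\<forall>y. a y = 0" using h pe z by (auto dest: bspec[of _ _ "(_, 0)"])
    then have "a = 0" by (simp add: fun_eq_iff)
    ultimately show "p = 0" using pe by (simp add: zero_prod_def)
  qed
qed



lemma ball_dsum: "(\<forall>p\<in>dsum sc. Q p) = (\<forall>x a. a \<in> dual_space sc \<longrightarrow> Q (x, a))"
  by (auto simp: dsum_def)

lemma circ_a_Pair[simp]: "circ_a dot (x, a) (y, b) = (dot x y, \<lambda>u. b (dot x u))"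
  by (simp add: circ_a_def dual_rep_def Lmul_def fun_eq_iff)
lemma br_a_Pair[simp]: "br_a pb (x, a) (y, b) = (pb x y, \<lambda>u. - b (pb x u))"
  by (simp add: br_a_def dual_rep_def Lmul_def fun_eq_iff)

locale pois =
  fixes sc :: "'k::field \<Rightarrow> 'a::ab_group_add \<Rightarrow> 'a" and dot pb :: "'a \<Rightarrow> 'a \<Rightarrow> 'a"
  assumes P: "poisson_algebra sc dot pb"
begin
lemma vs: "Vector_Spaces.vector_space sc" using P by (simp add: poisson_algebra_def)
sublocale d: bil sc dot using P by (unfold_locales) (simp add: poisson_algebra_def)
sublocale p: bil sc pb using P by (unfold_locales) (simp add: poisson_algebra_def)
lemma PA: "(\<forall>x y. dot x y = dot y x)" "(\<forall>x y z. dot (dot x y) z = dot x (dot y z))"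
  "(\<forall>x y. pb x y = - pb y x)" "(\<forall>x y z. pb x (pb y z) + pb y (pb z x) + pb z (pb x y) = 0)"
  "(\<forall>x y z. pb x (dot y z) = dot (pb x y) z + dot y (pb x z))"
  using P unfolding poisson_algebra_def by blast+
lemmas comm = PA(1)[rule_format] and assoc = PA(2)[rule_format] and skew = PA(3)[rule_format]
  and jac = PA(4)[rule_format] and leib = PA(5)[rule_format]

lemma ld_add[simp]: "f \<in> dual_space sc \<Longrightarrow> f (x + y) = f x + f y" by simp
lemma ld_scale[simp]: "f \<in> dual_space sc \<Longrightarrow> f (sc c x) = c * f x" by simp
lemma ld_zero[simp]: "f \<in> dual_space sc \<Longrightarrow> f 0 = 0" by simp
lemma ld_neg[simp]: "f \<in> dual_space sc \<Longrightarrow> f (- x) = - f x" by simp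
lemma ld_diff[simp]: "f \<in> dual_space sc \<Longrightarrow> f (x - y) = f x - f y" by simp

lemma jac2: "pb x (pb y z) = pb (pb x y) z + pb y (pb x z)"
proof -
  have "pb x (pb y z) + pb y (pb z x) + pb z (pb x y) = 0" by (rule jac)
  moreover have "pb y (pb z x) = - pb y (pb x z)" by (subst skew) simp
  moreover have "pb z (pb x y) = - pb (pb x y) z" by (rule skew)
  ultimately show ?thesis by (simp add: algebra_simps eq_neg_iff_add_eq_0 diff_eq_eq) 
qed

lemma leib2: "pb (dot x y) u = dot x (pb y u) + dot y (pb x u)"
proof -
  have "pb (dot x y) u = - pb u (dot x y)" by (rule skew)
  also have "\<dots> = - (dot (pb u x) y + dot x (pb u y))" by (simp add: leib)
  also have "\<dots> = dot x (pb y u) + dot y (pb x u)"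
    by (subst (1 2) skew) (simp add: comm)
  finally show ?thesis .
qed

lemma closed_circ: "b \<in> dual_space sc \<Longrightarrow> (\<lambda>u. b (dot x u)) \<in> dual_space sc"
  by (rule dualI[OF vs]) auto
lemma closed_br: "b \<in> dual_space sc \<Longrightarrow> (\<lambda>u. - b (pb x u)) \<in> dual_space sc"
  by (rule dualI[OF vs]) auto

lemma bil_circ: "bilinear_op_on (dsum_scale sc) (dsum sc) (circ_a dot)"
  unfolding bilinear_op_on_def ball_dsum
  by (auto simp: closed_circ fun_eq_iff algebra_simps)
lemma bil_br: "bilinear_op_on (dsum_scale sc) (dsum sc) (br_a pb)"
  unfolding bilinear_op_on_def ball_dsum
  by (auto simp: closed_br fun_eq_iff algebra_simps)

lemma idents:
  assumes a: "a \<in> dual_space sc" and b: "b \<in> dual_space sc" and c: "c \<in> dual_space sc"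
  fixes x y z
  defines "p \<equiv> (x, a)" and "q \<equiv> (y, b)" and "r \<equiv> (z, c)"
  shows "circ_a dot p (circ_a dot q r) = circ_a dot (circ_a dot p q) r"
    and "circ_a dot (circ_a dot p q) r = circ_a dot (circ_a dot q p) r"
    and "br_a pb p (br_a pb q r) = br_a pb (br_a pb p q) r + br_a pb q (br_a pb p r)"
    and "br_a pb p (circ_a dot q r) = circ_a dot (br_a pb p q) r + circ_a dot q (br_a pb p r)"
    and "br_a pb (circ_a dot p q) r = circ_a dot p (br_a pb q r) + circ_a dot q (br_a pb p r)"
    and "circ_a dot (br_a pb p q) r = - circ_a dot (br_a pb q p) r"
    and "dsum_form (circ_a dot p q) r = dsum_form p (circ_a dot q r - circ_a dot r q)"
    and "dsum_form (br_a pb p q) r = dsum_form p (br_a pb q r + br_a pb r q)"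
proof -
  show "circ_a dot p (circ_a dot q r) = circ_a dot (circ_a dot p q) r"
    by (simp add: p_def q_def r_def fun_eq_iff assoc) (metis assoc comm)
  show "circ_a dot (circ_a dot p q) r = circ_a dot (circ_a dot q p) r"
    by (simp add: p_def q_def r_def fun_eq_iff comm)
  have e3: "pb y (pb x u) = pb x (pb y u) - pb (pb x y) u" for u by (simp only: jac2[of x y u]) simp
  show "br_a pb p (br_a pb q r) = br_a pb (br_a pb p q) r + br_a pb q (br_a pb p r)"
    using jac2[of x y z] by (simp add: p_def q_def r_def fun_eq_iff e3 c)
  have e4: "dot y (pb x u) = pb x (dot y u) - dot (pb x y) u" for u by (simp only: leib[of x y u]) simp
  show "br_a pb p (circ_a dot q r) = circ_a dot (br_a pb p q) r + circ_a dot q (br_a pb p r)"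
    using leib[of x y z] by (simp add: p_def q_def r_def fun_eq_iff e4 c)
  have e5a: "pb y (dot x u) = dot x (pb y u) + dot y (pb x u) - pb x (dot y u)" for u
  proof -
    have "dot (pb y x) u = - dot (pb x y) u" by (subst skew) simp
    thus ?thesis by (simp add: leib)
  qed
  have e5: "c (pb y (dot x u)) = c (dot x (pb y u)) + c (dot y (pb x u)) - c (pb x (dot y u))" for u
    by (simp only: e5a[of u]) (simp add: c)
  show "br_a pb (circ_a dot p q) r = circ_a dot p (br_a pb q r) + circ_a dot q (br_a pb p r)"
    by (simp add: p_def q_def r_def fun_eq_iff leib2 c e5)
  have e6a: "dot (pb x y) u = - dot (pb y x) u" for u by (subst skew) simp
  have e6: "c (dot (pb x y) u) = - c (dot (pb y x) u)" for u by (simp only: e6a[of u]) (simp add: c)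
  show "circ_a dot (br_a pb p q) r = - circ_a dot (br_a pb q p) r"
    by (simp add: p_def q_def r_def fun_eq_iff c e6 e6a)
  show "dsum_form (circ_a dot p q) r = dsum_form p (circ_a dot q r - circ_a dot r q)"
    by (simp add: p_def q_def r_def a b c comm)
  have e8: "pb y x = - pb x y" "pb z x = - pb x z" "pb z y = - pb y z" by (rule skew)+
  show "dsum_form (br_a pb p q) r = dsum_form p (br_a pb q r + br_a pb r q)"
    by (simp add: p_def q_def r_def a b c e8)
qed


end

lemma part_a:
  fixes sc :: "'k::field \<Rightarrow> 'a::ab_group_add \<Rightarrow> 'a"
  assumes P: "poisson_algebra sc dot pb" and fd: "\<exists>Basis. finite_dimensional_vector_space sc Basis"
  shows "quadratic_dual_pre_poisson_on (dsum_scale sc) (dsum sc) (circ_a dot) (br_a pb) dsum_form"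
proof -
  interpret pois sc dot pb by unfold_locales (rule P)
  note F = form_dsum[OF vs fd]
  have I1: "\<forall>x\<in>dsum sc. \<forall>y\<in>dsum sc. \<forall>z\<in>dsum sc.
        circ_a dot x (circ_a dot y z) = circ_a dot (circ_a dot x y) z \<and>
        circ_a dot (circ_a dot x y) z = circ_a dot (circ_a dot y x) z \<and>
        br_a pb x (br_a pb y z) = br_a pb (br_a pb x y) z + br_a pb y (br_a pb x z) \<and>
        br_a pb x (circ_a dot y z) = circ_a dot (br_a pb x y) z + circ_a dot y (br_a pb x z) \<and>
        br_a pb (circ_a dot x y) z = circ_a dot x (br_a pb y z) + circ_a dot y (br_a pb x z) \<and>
        circ_a dot (br_a pb x y) z = - circ_a dot (br_a pb y x) z"
    unfolding ball_dsum by (intro allI impI conjI; rule idents(1-6); assumption)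
  have I2: "\<forall>x\<in>dsum sc. \<forall>y\<in>dsum sc. \<forall>z\<in>dsum sc.
        dsum_form (circ_a dot x y) z = dsum_form x (circ_a dot y z - circ_a dot z y) \<and>
        dsum_form (br_a pb x y) z = dsum_form x (br_a pb y z + br_a pb z y)"
    unfolding ball_dsum by (intro allI impI conjI; rule idents(7-8); assumption)
  show ?thesis
    unfolding quadratic_dual_pre_poisson_on_def dual_pre_poisson_on_def
    using vs_dsum[OF vs] subspace_dsum[OF vs] bil_circ bil_br I1 I2 F by blast
qed



lemma circ_b_Pair[simp]: "circ_b m (x, a) (y, b) = (m x y, \<lambda>u. b (m x u) + a (m y u) - a (m u y))"
  by (simp add: circ_b_def dual_rep_def Lmul_def Rmul_def fun_eq_iff)
lemma br_b_Pair[simp]: "br_b k (x, a) (y, b) = (k x y, \<lambda>u. a (k y u) + a (k u y) - b (k x u))"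
  by (simp add: br_b_def dual_rep_def Lmul_def Rmul_def fun_eq_iff algebra_simps)

locale dpp =
  fixes sc :: "'k::field \<Rightarrow> 'a::ab_group_add \<Rightarrow> 'a" and m k :: "'a \<Rightarrow> 'a \<Rightarrow> 'a"
  assumes D: "dual_pre_poisson_on sc UNIV m k"
begin
lemma vs: "Vector_Spaces.vector_space sc" using D by (simp add: dual_pre_poisson_on_def)
sublocale d: bil sc m using D by (unfold_locales) (simp add: dual_pre_poisson_on_def)
sublocale p: bil sc k using D by (unfold_locales) (simp add: dual_pre_poisson_on_def)
lemma AX: "\<forall>x y z. m x (m y z) = m (m x y) z \<and>
        m (m x y) z = m (m y x) z \<and>
        k x (k y z) = k (k x y) z + k y (k x z) \<and>
        k x (m y z) = m (k x y) z + m y (k x z) \<and>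
        k (m x y) z = m x (k y z) + m y (k x z) \<and>
        m (k x y) z = - m (k y x) z"
  using D unfolding dual_pre_poisson_on_def by blast
lemma aA: "m x (m y z) = m (m x y) z" using AX by blast
lemma aP: "m (m x y) z = m (m y x) z" using AX by blast
lemma aL: "k x (k y z) = k (k x y) z + k y (k x z)" using AX by blast
lemma aD: "k x (m y z) = m (k x y) z + m y (k x z)" using AX by blast
lemma aE: "k (m x y) z = m x (k y z) + m y (k x z)" using AX by blast
lemma aS: "m (k x y) z = - m (k y x) z" using AX by blast
lemma aK0: "k (k w w) z = 0"
  using aL[of w w z] by simp
lemma aK: "k (k x y) z = - k (k y x) z"
proof -
  have "k (k (x + y) (x + y)) z = 0" by (rule aK0)
  then have "k (k x y) z + k (k y x) z = 0" by (simp add: aK0 algebra_simps)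
  then show ?thesis by (simp add: eq_neg_iff_add_eq_0)
qed

lemma ld_add[simp]: "f \<in> dual_space sc \<Longrightarrow> f (x + y) = f x + f y" by simp
lemma ld_scale[simp]: "f \<in> dual_space sc \<Longrightarrow> f (sc c x) = c * f x" by simp
lemma ld_zero[simp]: "f \<in> dual_space sc \<Longrightarrow> f 0 = 0" by simp
lemma ld_neg[simp]: "f \<in> dual_space sc \<Longrightarrow> f (- x) = - f x" by simp
lemma ld_diff[simp]: "f \<in> dual_space sc \<Longrightarrow> f (x - y) = f x - f y" by simp

context fixes f assumes f: "f \<in> dual_space sc"
begin
lemma fA: "f (m x (m y z)) = f (m (m x y) z)" by (rule arg_cong[of _ _ f]) (rule aA)
lemma fP: "f (m (m x y) z) = f (m (m y x) z)" by (rule arg_cong[of _ _ f]) (rule aP)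
lemma fL: "f (k x (k y z)) = f (k (k x y) z) + f (k y (k x z))" by (simp only: aL[of x y z]) (simp add: f)
lemma fD: "f (k x (m y z)) = f (m (k x y) z) + f (m y (k x z))" by (simp only: aD[of x y z]) (simp add: f)
lemma fE: "f (k (m x y) z) = f (m x (k y z)) + f (m y (k x z))" by (simp only: aE[of x y z]) (simp add: f)
lemma fS: "f (m (k x y) z) = - f (m (k y x) z)" by (simp only: aS[of x y z]) (simp add: f)
lemma fK: "f (k (k x y) z) = - f (k (k y x) z)" by (simp only: aK[of x y z]) (simp add: f)
end

lemma closed_circ: "a \<in> dual_space sc \<Longrightarrow> b \<in> dual_space sc \<Longrightarrow> a' \<in> dual_space sc \<Longrightarrow> (\<lambda>u. b (m x u) + a (m y u) - a' (m u y')) \<in> dual_space sc"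
  by (rule dualI[OF vs]) (auto simp: algebra_simps)
lemma closed_br: "a \<in> dual_space sc \<Longrightarrow> b \<in> dual_space sc \<Longrightarrow> a' \<in> dual_space sc \<Longrightarrow> (\<lambda>u. a (k y u) + a' (k u y') - b (k x u)) \<in> dual_space sc"
  by (rule dualI[OF vs]) (auto simp: algebra_simps)

lemma bil_circ: "bilinear_op_on (dsum_scale sc) (dsum sc) (circ_b m)"
  unfolding bilinear_op_on_def ball_dsum
  by (auto simp: closed_circ fun_eq_iff algebra_simps)
lemma bil_br: "bilinear_op_on (dsum_scale sc) (dsum sc) (br_b k)"
  unfolding bilinear_op_on_def ball_dsum
  by (auto simp: closed_br fun_eq_iff algebra_simps)

lemma idents:
  assumes a: "a \<in> dual_space sc" and b: "b \<in> dual_space sc" and c: "c \<in> dual_space sc"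
  fixes x y z
  defines "p \<equiv> (x, a)" and "q \<equiv> (y, b)" and "r \<equiv> (z, c)"
  shows "circ_b m p (circ_b m q r) = circ_b m (circ_b m p q) r"
    and "circ_b m (circ_b m p q) r = circ_b m (circ_b m q p) r"
    and "br_b k p (br_b k q r) = br_b k (br_b k p q) r + br_b k q (br_b k p r)"
    and "br_b k p (circ_b m q r) = circ_b m (br_b k p q) r + circ_b m q (br_b k p r)"
    and "br_b k (circ_b m p q) r = circ_b m p (br_b k q r) + circ_b m q (br_b k p r)"
    and "circ_b m (br_b k p q) r = - circ_b m (br_b k q p) r"
    and "dsum_form (circ_b m p q) r = dsum_form p (circ_b m q r - circ_b m r q)"
    and "dsum_form (br_b k p q) r = dsum_form p (br_b k q r + br_b k r q)"
proof -
  have i1: "m y (m x u) = m (m x y) u" for u by (simp add: aA aP[of y x])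
  have i2: "m z (m x u) = m x (m z u)" for u by (simp add: aA aP[of z x])
  have i3: "m u (m y z) = m (m z u) y + m y (m u z) - m (m u z) y" for u
    by (simp add: aA aP[of u y] aP[of z u])
  show "circ_b m p (circ_b m q r) = circ_b m (circ_b m p q) r"
    by (simp add: p_def q_def r_def fun_eq_iff a b c aA aP algebra_simps)
  show "circ_b m (circ_b m p q) r = circ_b m (circ_b m q p) r"
    by (simp add: p_def q_def r_def fun_eq_iff a b c aA aP algebra_simps)
  show "br_b k p (br_b k q r) = br_b k (br_b k p q) r + br_b k q (br_b k p r)"
    by (simp add: p_def q_def r_def fun_eq_iff a b c aL[of x y z] fL[OF c, of x y] fL[OF b, of x z]
        fL[OF b, of x _ z] fL[OF a, of y z] fL[OF a, of y _ z] fK[OF a, of _ z y] algebra_simps)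
  show "br_b k p (circ_b m q r) = circ_b m (br_b k p q) r + circ_b m q (br_b k p r)"
    by (simp add: p_def q_def r_def fun_eq_iff a b c aD[of x y z] fD[OF c, of x y] fD[OF b, of x z]
        fD[OF b, of x _ z] fD[OF a, of y z] fE[OF a, of z _ y] fD[OF a, of y _ z] fE[OF a, of _ z y]
        fD[OF a, of z y] fE[OF a, of y _ z] fE[OF a, of y z] fD[OF a, of _ y z]
        fS[OF a, of z y] fS[OF a, of _ y z] algebra_simps)
  show "br_b k (circ_b m p q) r = circ_b m p (br_b k q r) + circ_b m q (br_b k p r)"
    by (simp add: p_def q_def r_def fun_eq_iff a b c aE[of x y z] fE[OF c, of x y] fD[OF c, of y x]
        fD[OF c, of x y] fS[OF c, of y x] fD[OF b, of z x] fE[OF b, of x _ z] fS[OF b, of z x]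
        fD[OF a, of z y] fE[OF a, of y _ z] fS[OF a, of z y] fS[OF a, of _ z y] algebra_simps)
  show "circ_b m (br_b k p q) r = - circ_b m (br_b k q p) r"
    by (simp add: p_def q_def r_def fun_eq_iff a b c aS[of x y z] fS[OF c, of y x]
        fE[OF a, of z _ y] fE[OF a, of _ z y] fE[OF b, of z _ x] fE[OF b, of _ z x] algebra_simps)
  show "dsum_form (circ_b m p q) r = dsum_form p (circ_b m q r - circ_b m r q)"
    by (simp add: p_def q_def r_def a b c algebra_simps)
  show "dsum_form (br_b k p q) r = dsum_form p (br_b k q r + br_b k r q)"
    by (simp add: p_def q_def r_def a b c algebra_simps)
qed

end

lemma part_b:
  fixes sc :: "'k::field \<Rightarrow> 'a::ab_group_add \<Rightarrow> 'a"
  assumes D: "dual_pre_poisson_on sc UNIV m k" and fd: "\<exists>Basis. finite_dimensional_vector_space sc Basis"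
  shows "quadratic_dual_pre_poisson_on (dsum_scale sc) (dsum sc) (circ_b m) (br_b k) dsum_form"
proof -
  interpret dpp sc m k by unfold_locales (rule D)
  note F = form_dsum[OF vs fd]
  have I1: "\<forall>x\<in>dsum sc. \<forall>y\<in>dsum sc. \<forall>z\<in>dsum sc.
        circ_b m x (circ_b m y z) = circ_b m (circ_b m x y) z \<and>
        circ_b m (circ_b m x y) z = circ_b m (circ_b m y x) z \<and>
        br_b k x (br_b k y z) = br_b k (br_b k x y) z + br_b k y (br_b k x z) \<and>
        br_b k x (circ_b m y z) = circ_b m (br_b k x y) z + circ_b m y (br_b k x z) \<and>
        br_b k (circ_b m x y) z = circ_b m x (br_b k y z) + circ_b m y (br_b k x z) \<and>
        circ_b m (br_b k x y) z = - circ_b m (br_b k y x) z"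
    unfolding ball_dsum by (intro allI impI conjI; rule idents(1-6); assumption)
  have I2: "\<forall>x\<in>dsum sc. \<forall>y\<in>dsum sc. \<forall>z\<in>dsum sc.
        dsum_form (circ_b m x y) z = dsum_form x (circ_b m y z - circ_b m z y) \<and>
        dsum_form (br_b k x y) z = dsum_form x (br_b k y z + br_b k z y)"
    unfolding ball_dsum by (intro allI impI conjI; rule idents(7-8); assumption)
  show ?thesis
    unfolding quadratic_dual_pre_poisson_on_def dual_pre_poisson_on_def
    using vs_dsum[OF vs] subspace_dsum[OF vs] bil_circ bil_br I1 I2 F by blast
qed

theorem proposition2p34:
  fixes sc :: "'k::field_char_0 \<Rightarrow> 'a::ab_group_add \<Rightarrow> 'a"
  assumes fd: "\<exists>Basis. finite_dimensional_vector_space sc Basis"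
  shows "(\<forall>dot pb. poisson_algebra sc dot pb \<longrightarrow>
            quadratic_dual_pre_poisson_on (dsum_scale sc) (dsum sc) (circ_a dot) (br_a pb) dsum_form)
       \<and> (\<forall>circ br. dual_pre_poisson_on sc UNIV circ br \<longrightarrow>
            quadratic_dual_pre_poisson_on (dsum_scale sc) (dsum sc) (circ_b circ) (br_b br) dsum_form)"
  using part_a[OF _ fd] part_b[OF _ fd] by blast

end
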